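(* Let $E$ be an infinite-dimensional real Banach space with density character $\kappa$. Then there exist $\delta>0$ and a linearly independent set $S\subseteq S_E$ (the unit sphere of $E$) with $|S|=\kappa$ such that $\|x-\lambda x'\|\ge\delta$ for all distinct $x,x'\in S$ and all $\lambda\in\mathbb R$.
   Context: The density character of a topological space is the least cardinality of a dense subset. *)

theory Defs
  imports "HOL-Analysis.Analysis"
begin

text \<open>A set D realises the density character of a topological space (type 'a):
  D is dense and has least cardinality among all dense subsets.\<close>
definition min_card_dense :: "'a::topological_space set \<Rightarrow> bool" where
  "min_card_dense T \<longleftrightarrow> closure T = UNIV \<and>
     (\<forall>E::'a set. closure E = UNIV \<longrightarrow> (card_of T, card_of E) \<in> ordLeq)"

definition infinite_dimensional :: "'a::real_vector itself \<Rightarrow> bool" where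
  "infinite_dimensional _ \<longleftrightarrow> (\<forall>B::'a set. finite B \<longrightarrow> span B \<noteq> UNIV)"

end

theory Submission
  imports Defs
begin



lemma infdist_lessE:
  assumes "A \<noteq> {}" "infdist x A < e"
  obtains a where "a \<in> A" "dist x a < e"
proof -
  have bdd: "bdd_below ((\<lambda>a. dist x a) ` A)" by (rule bdd_belowI[of _ 0]) auto
  have "(INF a\<in>A. dist x a) < e" using assms(2) by (simp add: infdist_notempty[OF assms(1)])
  hence "\<exists>a\<in>A. dist x a < e" by (simp add: cINF_less_iff[OF assms(1) bdd])
  thus ?thesis using that by blast
qed

lemma min_dense_exists: "\<exists>T::'a::topological_space set. min_card_dense T"
proof -
  let ?R = "{card_of E | E::'a set. closure E = UNIV}"
  have "card_of (UNIV::'a set) \<in> ?R" by auto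
  hence ne: "?R \<noteq> {}" by blast
  have co: "\<forall>r\<in>?R. Card_order r" using card_of_Card_order by blast
  obtain r where r: "r \<in> ?R" "\<forall>r'\<in>?R. (r, r') \<in> ordLeq"
    using exists_minim_Card_order[OF ne co] by blast
  obtain T where T: "r = card_of T" "closure T = UNIV" using r(1) by blast
  have "\<forall>E::'a set. closure E = UNIV \<longrightarrow> (card_of T, card_of E) \<in> ordLeq"
    using r(2) T(1) by blast
  thus ?thesis unfolding min_card_dense_def using T(2) by blast
qed

lemma closed_span_insert:
  fixes F :: "'a::real_normed_vector set"
  assumes cl: "closed (span F)"
  shows "closed (span (insert x F))"
proof (cases "x \<in> span F")
  case True then show ?thesis using cl by (simp add: span_redundant)
next
  case False
  define d where "d = infdist x (span F)"
  have "span F \<noteq> {}" using span_zero by blast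
  hence "d > 0" using False cl in_closure_iff_infdist_zero[of "span F" x] infdist_nonneg[of x]
    unfolding d_def by (simp add: closure_closed) (metis less_eq_real_def)
  have key: "\<bar>c\<bar> * d \<le> norm (m + c *\<^sub>R x)" if "m \<in> span F" for m c
  proof (cases "c = 0")
    case True then show ?thesis by simp
  next
    case False
    have "- (1/c) *\<^sub>R m \<in> span F" using that by (simp add: span_scale span_neg)
    hence "d \<le> dist x (- (1/c) *\<^sub>R m)" unfolding d_def by (rule infdist_le)
    also have "\<dots> = norm (x + (1/c) *\<^sub>R m)" by (simp add: dist_norm)
    finally have "\<bar>c\<bar> * d \<le> \<bar>c\<bar> * norm (x + (1/c) *\<^sub>R m)" by (simp add: mult_left_mono)
    also have "\<bar>c\<bar> * norm (x + (1/c) *\<^sub>R m) = norm (c *\<^sub>R (x + (1/c) *\<^sub>R m))" by simp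
    also have "c *\<^sub>R (x + (1/c) *\<^sub>R m) = m + c *\<^sub>R x" using False by (simp add: algebra_simps)
    finally show ?thesis .
  qed
  show ?thesis unfolding closed_sequential_limits
  proof (intro allI impI)
    fix y l assume h: "(\<forall>n. y n \<in> span (insert x F)) \<and> y \<longlonglongrightarrow> l"
    hence "\<forall>n. \<exists>k. y n - k *\<^sub>R x \<in> span F" unfolding span_insert by blast
    then obtain c where c: "\<And>n. y n - c n *\<^sub>R x \<in> span F"
      by (metis (no_types))
    have "Cauchy y" using h LIMSEQ_imp_Cauchy by blast
    have "Cauchy c"
    proof (rule metric_CauchyI)
      fix e :: real assume "e > 0"
      then obtain M where M: "\<forall>m\<ge>M. \<forall>n\<ge>M. dist (y m) (y n) < e * d"
        using \<open>Cauchy y\<close>[unfolded Cauchy_def, rule_format, of "e * d"] \<open>d > 0\<close> \<open>e > 0\<close> by auto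
      show "\<exists>M. \<forall>m\<ge>M. \<forall>n\<ge>M. dist (c m) (c n) < e"
      proof (intro exI allI impI)
        fix m n assume "m \<ge> M" "n \<ge> M"
        have "(y m - c m *\<^sub>R x) - (y n - c n *\<^sub>R x) \<in> span F" using c by (simp add: span_diff)
        hence "\<bar>c m - c n\<bar> * d \<le> norm (((y m - c m *\<^sub>R x) - (y n - c n *\<^sub>R x)) + (c m - c n) *\<^sub>R x)"
          by (rule key)
        also have "\<dots> = dist (y m) (y n)" by (simp add: dist_norm algebra_simps)
        also have "\<dots> < e * d" using M \<open>m \<ge> M\<close> \<open>n \<ge> M\<close> by blast
        finally show "dist (c m) (c n) < e" using \<open>d > 0\<close> by (simp add: dist_real_def)
      qed
    qed
    then obtain cl where "c \<longlonglongrightarrow> cl" using Cauchy_convergent_iff convergent_def by blast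
    hence lim: "(\<lambda>n. y n - c n *\<^sub>R x) \<longlonglongrightarrow> l - cl *\<^sub>R x"
      using h by (intro tendsto_intros) auto
    have mem: "\<forall>n. y n - c n *\<^sub>R x \<in> span F" using c by blast
    have "l - cl *\<^sub>R x \<in> span F"
      using cl[unfolded closed_sequential_limits, rule_format, OF conjI[OF mem lim]] .
    thus "l \<in> span (insert x F)" unfolding span_insert by blast
  qed
qed

lemma closed_span_finite:
  fixes F :: "'a::real_normed_vector set"
  shows "finite F \<Longrightarrow> closed (span F)"
  by (induction F rule: finite_induct) (auto intro: closed_span_insert)


primrec Dn :: "'a::real_vector set \<Rightarrow> nat \<Rightarrow> 'a set" where
  "Dn S 0 = {0}"
| "Dn S (Suc n) = (\<lambda>(d,q,x). d + of_rat q *\<^sub>R x) ` (Dn S n \<times> (UNIV::rat set) \<times> S)"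

lemma Dn_card:
  assumes inf: "infinite S"
  shows "(card_of (Dn S n), card_of S) \<in> ordLeq"
proof (induction n)
  case 0
  have "S \<noteq> {}" using inf by auto
  then show ?case by (simp add: card_of_singl_ordLeq)
next
  case (Suc n)
  have rat: "(card_of (UNIV::rat set), card_of S) \<in> ordLeq"
  proof -
    obtain f :: "nat \<Rightarrow> _" where f: "inj f" "range f \<subseteq> S"
      using infinite_iff_countable_subset[THEN iffD1, OF inf] by (elim exE conjE)
    have "inj (f \<circ> to_nat :: rat \<Rightarrow> _)" using f(1) by (simp add: inj_compose)
    moreover have "(f \<circ> to_nat) ` (UNIV::rat set) \<subseteq> S" using f(2) by auto
    ultimately show ?thesis using card_of_ordLeq[of "UNIV::rat set" S] by blast
  qed
  have fS: "\<not> finite (Field (card_of S))" using inf by (simp add: Field_card_of)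
  have "(card_of ((UNIV::rat set) \<times> S), card_of S) \<in> ordLeq"
    using card_of_Times_ordLeq_infinite_Field[OF fS rat ordLeq_refl[OF card_of_Card_order] card_of_Card_order] .
  hence "(card_of (Dn S n \<times> (UNIV::rat set) \<times> S), card_of S) \<in> ordLeq"
    by (rule card_of_Times_ordLeq_infinite_Field[OF fS Suc.IH _ card_of_Card_order])
  moreover have "(card_of (Dn S (Suc n)), card_of (Dn S n \<times> (UNIV::rat set) \<times> S)) \<in> ordLeq"
    unfolding Dn.simps by (rule card_of_image)
  ultimately show ?case using ordLeq_transitive by blast
qed

lemma Dn_union_card:
  assumes inf: "infinite S"
  shows "(card_of (\<Union>n. Dn S n), card_of S) \<in> ordLeq"
proof -
  obtain f :: "nat \<Rightarrow> _" where f: "inj f" "range f \<subseteq> S"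
    using infinite_iff_countable_subset[THEN iffD1, OF inf] by (elim exE conjE)
  hence "(card_of (UNIV::nat set), card_of S) \<in> ordLeq" using card_of_ordLeq[of "UNIV::nat set" S] by blast
  thus ?thesis using card_of_UNION_ordLeq_infinite[OF inf] Dn_card[OF inf] by blast
qed

lemma Dn_SucE: "b \<in> Dn S (Suc m) \<Longrightarrow> \<exists>d q x. b = d + of_rat q *\<^sub>R x \<and> d \<in> Dn S m \<and> x \<in> S"
  by auto

lemma Dn_SucI: "d \<in> Dn S m \<Longrightarrow> x \<in> S \<Longrightarrow> d + of_rat q *\<^sub>R x \<in> Dn S (Suc m)"
  by (simp add: image_iff) blast

lemma Dn_add: "a \<in> Dn S n \<Longrightarrow> b \<in> Dn S m \<Longrightarrow> a + b \<in> Dn S (n + m)"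
proof (induction m arbitrary: b)
  case 0 then show ?case by simp
next
  case (Suc m)
  obtain d q x where b: "b = d + of_rat q *\<^sub>R x" "d \<in> Dn S m" "x \<in> S"
    using Dn_SucE[OF Suc.prems(2)] by blast
  have "a + d \<in> Dn S (n + m)" using Suc.IH[OF Suc.prems(1) b(2)] .
  hence "(a + d) + of_rat q *\<^sub>R x \<in> Dn S (Suc (n + m))"
    using b(3) by (rule Dn_SucI)
  thus ?case using b(1) by (simp add: add.assoc)
qed

lemma Dn_scale: "a \<in> Dn S n \<Longrightarrow> of_rat r *\<^sub>R a \<in> Dn S n"
proof (induction n arbitrary: a)
  case 0 then show ?case by simp
next
  case (Suc n)
  obtain d q x where a: "a = d + of_rat q *\<^sub>R x" "d \<in> Dn S n" "x \<in> S"
    using Dn_SucE[OF Suc.prems] by blast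
  have "of_rat r *\<^sub>R d \<in> Dn S n" using Suc.IH[OF a(2)] .
  hence "of_rat r *\<^sub>R d + of_rat (r*q) *\<^sub>R x \<in> Dn S (Suc n)"
    using a(3) by (rule Dn_SucI)
  thus ?case using a(1) by (simp add: scaleR_add_right of_rat_mult)
qed

lemma Dn_one: "x \<in> S \<Longrightarrow> x \<in> Dn S (Suc 0)"
  using Dn_SucI[of 0 S 0 x 1] by simp

lemma closure_seqI:
  fixes l :: "'a::first_countable_topology"
  shows "\<forall>n. x n \<in> S \<Longrightarrow> x \<longlonglongrightarrow> l \<Longrightarrow> l \<in> closure S"
  using closure_sequential[of l S] by blast

lemma closure_seqE:
  fixes l :: "'a::first_countable_topology"
  assumes "l \<in> closure S"
  obtains x where "\<forall>n. x n \<in> S" "x \<longlonglongrightarrow> l"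
  using closure_sequential[of l S] assms by blast

lemma span_sub_closure_Dn:
  fixes S :: "'a::real_normed_vector set"
  shows "span S \<subseteq> closure (\<Union>n. Dn S n)"
proof (rule span_minimal)
  let ?D = "\<Union>n. Dn S n"
  have "S \<subseteq> ?D" using Dn_one by blast
  then show "S \<subseteq> closure ?D" using closure_subset by blast
  have add: "a + b \<in> ?D" if h: "a \<in> ?D" "b \<in> ?D" for a b
  proof -
    obtain n m where "a \<in> Dn S n" "b \<in> Dn S m" using h by blast
    hence "a + b \<in> Dn S (n + m)" by (rule Dn_add)
    thus ?thesis by blast
  qed
  have sc: "of_rat r *\<^sub>R a \<in> ?D" if h: "a \<in> ?D" for a r
  proof -
    obtain n where "a \<in> Dn S n" using h by blast
    hence "of_rat r *\<^sub>R a \<in> Dn S n" by (rule Dn_scale)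
    thus ?thesis by blast
  qed
  show "subspace (closure ?D)" unfolding subspace_def
  proof (intro conjI ballI allI)
    have "0 \<in> Dn S 0" by simp
    hence "0 \<in> ?D" by blast
    thus "0 \<in> closure ?D" using closure_subset by blast
  next
    fix a b assume "a \<in> closure ?D" "b \<in> closure ?D"
    obtain x where "\<forall>n. x n \<in> ?D" "x \<longlonglongrightarrow> a" using \<open>a \<in> closure ?D\<close> by (rule closure_seqE)
    moreover obtain y where "\<forall>n. y n \<in> ?D" "y \<longlonglongrightarrow> b" using \<open>b \<in> closure ?D\<close> by (rule closure_seqE)
    ultimately have "\<forall>n. x n + y n \<in> ?D" "(\<lambda>n. x n + y n) \<longlonglongrightarrow> a + b" using add by (simp_all add: tendsto_add)
    thus "a + b \<in> closure ?D" by (rule closure_seqI)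
  next
    fix c :: real and a assume "a \<in> closure ?D"
    then obtain x where x: "\<forall>n. x n \<in> ?D" "x \<longlonglongrightarrow> a"
      by (rule closure_seqE)
    have "c \<in> closure \<rat>" by (simp add: Rats_closure_real)
    then obtain q where q: "\<forall>n. q n \<in> \<rat>" "q \<longlonglongrightarrow> c"
      by (rule closure_seqE)
    have "q n *\<^sub>R x n \<in> ?D" for n
    proof -
      have "q n \<in> \<rat>" using q(1) by blast
      then obtain r where r: "q n = of_rat r" by (rule Rats_cases)
      have "x n \<in> ?D" using x(1) by blast
      from sc[OF this, of r] show ?thesis unfolding r .
    qed
    moreover have "(\<lambda>n. q n *\<^sub>R x n) \<longlonglongrightarrow> c *\<^sub>R a" using q(2) x(2) by (intro tendsto_intros)
    ultimately show "c *\<^sub>R a \<in> closure ?D" by (intro closure_seqI[of "\<lambda>n. q n *\<^sub>R x n"] allI)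
  qed
qed



lemma sep_aux:
  fixes x y :: "'a::real_normed_vector"
  assumes nx: "norm x = 1" and ny: "norm y = 1" and f: "c \<noteq> 0 \<Longrightarrow> norm (y - (1/c) *\<^sub>R x) \<ge> 1/2"
  shows "norm (x - c *\<^sub>R y) \<ge> 1/3"
proof (cases "\<bar>c\<bar> \<le> 2/3")
  case True
  have "norm x - norm (c *\<^sub>R y) \<le> norm (x - c *\<^sub>R y)" by (rule norm_triangle_ineq2)
  thus ?thesis using True nx ny by simp
next
  case False
  hence c0: "c \<noteq> 0" by auto
  have "x - c *\<^sub>R y = (- c) *\<^sub>R (y - (1/c) *\<^sub>R x)" using c0 by (simp add: algebra_simps)
  hence "norm (x - c *\<^sub>R y) = \<bar>c\<bar> * norm (y - (1/c) *\<^sub>R x)" by simp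
  also have "\<dots> \<ge> \<bar>c\<bar> * (1/2)" using mult_left_mono[OF f[OF c0], of "\<bar>c\<bar>"] by simp
  finally show ?thesis using False by linarith
qed

theorem lemma3p1:
  assumes "infinite_dimensional TYPE('a::banach)"
  shows "\<exists>\<delta>>0. \<exists>S::'a set. S \<subseteq> sphere 0 1 \<and> independent S \<and>
           (\<exists>T::'a set. min_card_dense T \<and> (card_of S, card_of T) \<in> ordIso) \<and>
           (\<forall>x\<in>S. \<forall>x'\<in>S. x \<noteq> x' \<longrightarrow> (\<forall>c::real. norm (x - c *\<^sub>R x') \<ge> \<delta>))"
proof -
  define P where "P = (\<lambda>S::'a set. S \<subseteq> sphere 0 1 \<and> independent S \<and>
      (\<forall>x\<in>S. \<forall>x'\<in>S. x \<noteq> x' \<longrightarrow> (\<forall>c::real. norm (x - c *\<^sub>R x') \<ge> 1/3)))"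
  have P1: "X \<subseteq> sphere 0 1" if "P X" for X using that unfolding P_def by (elim conjE)
  have P2: "independent X" if "P X" for X using that unfolding P_def by (elim conjE)
  have P3: "norm (x - c *\<^sub>R x') \<ge> 1/3" if "P X" "x \<in> X" "x' \<in> X" "x \<noteq> x'" for X x x' c
  proof -
    have "\<forall>x\<in>X. \<forall>x'\<in>X. x \<noteq> x' \<longrightarrow> (\<forall>c::real. norm (x - c *\<^sub>R x') \<ge> 1/3)"
      using that(1) unfolding P_def by (elim conjE)
    thus ?thesis using that(2-4) by blast
  qed
  have PI: "P X" if "X \<subseteq> sphere 0 1" "independent X"
     "\<And>x x' c. x \<in> X \<Longrightarrow> x' \<in> X \<Longrightarrow> x \<noteq> x' \<Longrightarrow> norm (x - c *\<^sub>R x') \<ge> 1/3" for X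
    unfolding P_def by (intro conjI ballI impI allI that)
  have Psub: "P X" if h: "P S" "X \<subseteq> S" for S X
  proof (rule PI)
    show "X \<subseteq> sphere 0 1" using P1[OF h(1)] h(2) by (rule order_trans[rotated])
    show "independent X" using P2[OF h(1)] h(2) by (rule independent_mono)
    fix x x' c assume "x \<in> X" "x' \<in> X" "x \<noteq> x'"
    thus "norm (x - c *\<^sub>R x') \<ge> 1/3" using P3[OF h(1)] h(2) by blast
  qed
  have "\<exists>M\<in>{S. P S}. \<forall>X\<in>{S. P S}. M \<subseteq> X \<longrightarrow> X = M"
  proof (rule subset_Zorn)
    fix C assume ch: "subset.chain {S. P S} C"
    have C1: "\<And>c. c \<in> C \<Longrightarrow> P c" using ch unfolding subset.chain_def by blast
    have C2: "\<And>c d. c \<in> C \<Longrightarrow> d \<in> C \<Longrightarrow> c \<subseteq> d \<or> d \<subseteq> c"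
      using ch unfolding subset.chain_def by blast
    have "P (\<Union>C)"
    proof (rule PI)
      show "\<Union>C \<subseteq> sphere 0 1" using P1[OF C1] by blast
      show "independent (\<Union>C)"
        by (rule independent_Union_directed, rule C2, assumption+, rule P2, rule C1, assumption)
      fix x x' c assume "x \<in> \<Union>C" "x' \<in> \<Union>C" "x \<noteq> x'"
      then obtain c1 c2 where "x \<in> c1" "c1 \<in> C" "x' \<in> c2" "c2 \<in> C" by blast
      then obtain c3 where "c3 \<in> C" "x \<in> c3" "x' \<in> c3" using C2 by blast
      thus "norm (x - c *\<^sub>R x') \<ge> 1/3" using P3[OF C1[OF \<open>c3 \<in> C\<close>]] \<open>x \<noteq> x'\<close> by blast
    qed
    thus "\<exists>U\<in>{S. P S}. \<forall>X\<in>C. X \<subseteq> U" by blast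
  qed
  then obtain S where S: "P S" and max: "\<And>X. P X \<Longrightarrow> S \<subseteq> X \<Longrightarrow> X = S" by blast
  have dense: "closure (span S) = UNIV"
  proof (rule ccontr)
    assume "closure (span S) \<noteq> UNIV"
    then obtain z where z: "z \<notin> closure (span S)" by blast
    have ne: "span S \<noteq> {}" using span_zero by blast
    define d where "d = infdist z (span S)"
    have "d \<noteq> 0" using z in_closure_iff_infdist_zero[OF ne] unfolding d_def by blast
    hence "d > 0" using infdist_nonneg[of z "span S"] unfolding d_def by linarith
    have "infdist z (span S) < 2*d" using \<open>d > 0\<close> d_def by simp
    then obtain m where m: "m \<in> span S" "dist z m < 2*d" by (rule infdist_lessE[OF ne])
    define n where "n = norm (z - m)"
    have "d \<le> n" unfolding d_def n_def using infdist_le[OF m(1), of z] by (simp add: dist_norm)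
    have "n < 2*d" using m(2) by (simp add: n_def dist_norm)
    have npos: "n > 0" using \<open>d \<le> n\<close> \<open>d > 0\<close> by simp
    define y where "y = (1/n) *\<^sub>R (z - m)"
    have ny: "norm y = 1" using npos by (simp add: y_def n_def)
    have far: "norm (y - w) \<ge> 1/2" if w: "w \<in> span S" for w
    proof -
      have "m + n *\<^sub>R w \<in> span S" using m(1) w by (simp add: span_add span_scale)
      hence "d \<le> dist z (m + n *\<^sub>R w)" unfolding d_def by (rule infdist_le)
      also have "dist z (m + n *\<^sub>R w) = norm (n *\<^sub>R (y - w))"
        using npos by (simp add: y_def dist_norm algebra_simps)
      also have "norm (n *\<^sub>R (y - w)) = n * norm (y - w)" using npos by simp
      finally have "d \<le> n * norm (y - w)" .
      hence "n * (1/2) < n * norm (y - w)" using \<open>n < 2*d\<close> by linarith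
      hence "1/2 < norm (y - w)" using npos mult_less_cancel_left_pos by blast
      thus ?thesis by simp
    qed
    have yS: "y \<notin> span S" using far[of y] by auto
    have "P (insert y S)"
    proof (rule PI)
      show "insert y S \<subseteq> sphere 0 1" using P1[OF S] ny by auto
      show "independent (insert y S)" using independent_insertI[OF yS P2[OF S]] .
      {
        fix x x' c assume x: "x \<in> insert y S" and x': "x' \<in> insert y S" and ne: "x \<noteq> x'"
        show "norm (x - c *\<^sub>R x') \<ge> 1/3"
        proof (cases "x = y")
          case True
          hence "x' \<in> S" using x' ne by blast
          hence "c *\<^sub>R x' \<in> span S" by (simp add: span_base span_scale)
          thus ?thesis using far True by force
        next
          case False
          hence xS: "x \<in> S" using x by blast
          show ?thesis
          proof (cases "x' = y")
            case True
            have nx: "norm x = 1" using xS P1[OF S] by auto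
            have "c \<noteq> 0 \<Longrightarrow> norm (y - (1/c) *\<^sub>R x) \<ge> 1/2"
              using far[of "(1/c) *\<^sub>R x"] xS by (simp add: span_base span_scale)
            thus ?thesis using sep_aux[OF nx ny] True by blast
          next
            case False
            hence "x' \<in> S" using x' by blast
            thus ?thesis using xS ne P3[OF S] by blast
          qed
        qed
      }
    qed
    hence "insert y S = S" using max by blast
    thus False using yS span_base by blast
  qed
  have infS: "infinite S"
  proof
    assume "finite S"
    hence "closed (span S)" by (rule closed_span_finite)
    hence "span S = UNIV" using dense closure_closed by metis
    thus False using assms \<open>finite S\<close> unfolding infinite_dimensional_def by blast
  qed
  let ?D = "\<Union>n. Dn S n"
  have "closure (span S) \<subseteq> closure ?D"
    using span_sub_closure_Dn[of S] closure_minimal closed_closure by blast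
  hence Dd: "closure ?D = UNIV" using dense by blast
  obtain T :: "'a set" where T: "min_card_dense T" using min_dense_exists by blast
  have "(card_of T, card_of ?D) \<in> ordLeq" using T Dd unfolding min_card_dense_def by blast
  hence "(card_of T, card_of S) \<in> ordLeq" using Dn_union_card[OF infS] ordLeq_transitive by blast
  then obtain f where f: "inj_on f T" "f ` T \<subseteq> S" using card_of_ordLeq[of T S] by blast
  have "bij_betw f T (f ` T)" using f(1) by (simp add: bij_betw_def)
  hence "(card_of T, card_of (f ` T)) \<in> ordIso" using card_of_ordIso by blast
  hence iso: "(card_of (f ` T), card_of T) \<in> ordIso" using ordIso_symmetric by blast
  have PS: "P (f ` T)" using Psub[OF S f(2)] .
  have c1: "f ` T \<subseteq> sphere 0 1" by (rule P1[OF PS])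
  have c2: "independent (f ` T)" by (rule P2[OF PS])
  have c3: "\<exists>T'::'a set. min_card_dense T' \<and> (card_of (f ` T), card_of T') \<in> ordIso"
    using T iso by blast
  have c4: "\<forall>x\<in>f ` T. \<forall>x'\<in>f ` T. x \<noteq> x' \<longrightarrow> (\<forall>c::real. norm (x - c *\<^sub>R x') \<ge> 1/3)"
    using P3[OF PS] by blast
  have "(1/3::real) > 0" by simp
  with c1 c2 c3 c4 show ?thesis by blast
qed

end
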